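(* Over profiles whose ballots are strict weak orders (ties allowed), let $F$ be a VSCC satisfying Downward Homogeneity, Coherent Defeat, and Tolerant Positive Involvement. Then $F(\mathbf P)\subseteq SC(\mathbf P)$ for every profile $\mathbf P$.
   Context: Profiles: $\mathbf P:V\to\mathcal W(X)$, $V$ nonempty finite set of voters, $X=X(\mathbf P)$ nonempty finite set of candidates (from fixed infinite sets), $\mathcal W(X)$ the strict weak orders on $X$ (ties allowed). "Ranks $x$ above $y$" means strictly. $\mathrm{Margin}_{\mathbf P}(x,y)$ = #voters with $x$ strictly above $y$ minus #voters with $y$ strictly above $x$; $x$ majority preferred to $y$ if $>0$. Majority path: sequence with positive consecutive margins; strength = minimum of these. $(x,y)\in sc(\mathbf P)$ iff $\mathrm{Margin}_{\mathbf P}(x,y)>0$ exceeds the strength of every majority path from $y$ to $x$; $SC(\mathbf P)$ = set of $y$ with no $x$ such that $(x,y)\in sc(\mathbf P)$. A VSCC is $F$ with $\varnothing\ne F(\mathbf P)\subseteq X(\mathbf P)$. Downward Homogeneity: $F(\mathbf P)\subseteq F(2\mathbf P)$ ($2\mathbf P$ duplicates each voter). Coherent Defeat: $\mathrm{Margin}_{\mathbf P}(x,y)>0$ and no majority path from $y$ to $x$ imply $y\notin F(\mathbf P)$. Tolerant Positive Involvement: if $x\in F(\mathbf P)$ and $\mathbf P'$ adds one new voter who ranks $x$ strictly above every other candidate $y$ to which $x$ is not majority preferred in $\mathbf P$, then $x\in F(\mathbf P')$. *)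

theory Defs
  imports Main
begin

definition strict_weak_order_on :: "'c set \<Rightarrow> ('c \<times> 'c) set \<Rightarrow> bool" where
  "strict_weak_order_on X R \<longleftrightarrow>
     R \<subseteq> X \<times> X \<and>
     (\<forall>a b. (a, b) \<in> R \<longrightarrow> (b, a) \<notin> R) \<and>
     (\<forall>a\<in>X. \<forall>b\<in>X. \<forall>c\<in>X. (a, c) \<in> R \<longrightarrow> (a, b) \<in> R \<or> (b, c) \<in> R)"

text \<open>A profile is a triple (V, X, P): voters, candidates, ballots.
Ballots of non-voters are normalised to the empty relation.\<close>
type_synonym ('v, 'c) profile = "'v set \<times> 'c set \<times> ('v \<Rightarrow> ('c \<times> 'c) set)"

definition voters :: "('v, 'c) profile \<Rightarrow> 'v set" where
  "voters Pr = fst Pr"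

definition cands :: "('v, 'c) profile \<Rightarrow> 'c set" where
  "cands Pr = fst (snd Pr)"

definition ballot :: "('v, 'c) profile \<Rightarrow> 'v \<Rightarrow> ('c \<times> 'c) set" where
  "ballot Pr = snd (snd Pr)"

definition is_profile :: "('v, 'c) profile \<Rightarrow> bool" where
  "is_profile Pr \<longleftrightarrow>
     finite (voters Pr) \<and> voters Pr \<noteq> {} \<and>
     finite (cands Pr) \<and> cands Pr \<noteq> {} \<and>
     (\<forall>i\<in>voters Pr. strict_weak_order_on (cands Pr) (ballot Pr i)) \<and>
     (\<forall>i. i \<notin> voters Pr \<longrightarrow> ballot Pr i = {})"

definition margin :: "('v, 'c) profile \<Rightarrow> 'c \<Rightarrow> 'c \<Rightarrow> int" where
  "margin Pr x y =
     int (card {i \<in> voters Pr. (x, y) \<in> ballot Pr i})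
   - int (card {i \<in> voters Pr. (y, x) \<in> ballot Pr i})"

definition majority_path :: "('v, 'c) profile \<Rightarrow> 'c list \<Rightarrow> bool" where
  "majority_path Pr zs \<longleftrightarrow>
     length zs \<ge> 2 \<and> set zs \<subseteq> cands Pr \<and>
     (\<forall>i < length zs - 1. margin Pr (zs ! i) (zs ! Suc i) > 0)"

definition path_strength :: "('v, 'c) profile \<Rightarrow> 'c list \<Rightarrow> int" where
  "path_strength Pr zs = Min {margin Pr (zs ! i) (zs ! Suc i) | i. i < length zs - 1}"

definition majority_path_from_to :: "('v, 'c) profile \<Rightarrow> 'c \<Rightarrow> 'c \<Rightarrow> 'c list \<Rightarrow> bool" where
  "majority_path_from_to Pr a b zs \<longleftrightarrow> majority_path Pr zs \<and> hd zs = a \<and> last zs = b"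

definition sc :: "('v, 'c) profile \<Rightarrow> ('c \<times> 'c) set" where
  "sc Pr = {(x, y). x \<in> cands Pr \<and> y \<in> cands Pr \<and> margin Pr x y > 0 \<and>
              (\<forall>zs. majority_path_from_to Pr y x zs \<longrightarrow> margin Pr x y > path_strength Pr zs)}"

definition SC :: "('v, 'c) profile \<Rightarrow> 'c set" where
  "SC Pr = {y \<in> cands Pr. \<not> (\<exists>x. (x, y) \<in> sc Pr)}"

definition VSCC :: "(('v, 'c) profile \<Rightarrow> 'c set) \<Rightarrow> bool" where
  "VSCC F \<longleftrightarrow> (\<forall>Pr. is_profile Pr \<longrightarrow> F Pr \<noteq> {} \<and> F Pr \<subseteq> cands Pr)"

text \<open>Pr2 is a copy of 2Pr: every voter of Pr is replaced by two voters with
the same ballot (formally: a map g from the new voters onto the old ones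
with fibres of size exactly two, preserving ballots).\<close>
definition doubling :: "('v, 'c) profile \<Rightarrow> ('v, 'c) profile \<Rightarrow> bool" where
  "doubling Pr Pr2 \<longleftrightarrow> is_profile Pr2 \<and> cands Pr2 = cands Pr \<and>
     (\<exists>g. g ` voters Pr2 \<subseteq> voters Pr \<and>
          (\<forall>i\<in>voters Pr. card {j \<in> voters Pr2. g j = i} = 2) \<and>
          (\<forall>j\<in>voters Pr2. ballot Pr2 j = ballot Pr (g j)))"

definition downward_homogeneity :: "(('v, 'c) profile \<Rightarrow> 'c set) \<Rightarrow> bool" where
  "downward_homogeneity F \<longleftrightarrow>
     (\<forall>Pr. is_profile Pr \<longrightarrow> (\<exists>Pr2. doubling Pr Pr2 \<and> F Pr \<subseteq> F Pr2))"

definition coherent_defeat :: "(('v, 'c) profile \<Rightarrow> 'c set) \<Rightarrow> bool" where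
  "coherent_defeat F \<longleftrightarrow>
     (\<forall>Pr x y. is_profile Pr \<and> margin Pr x y > 0 \<and>
        \<not> (\<exists>zs. majority_path_from_to Pr y x zs) \<longrightarrow> y \<notin> F Pr)"

definition add_voter :: "('v, 'c) profile \<Rightarrow> 'v \<Rightarrow> ('v, 'c) profile \<Rightarrow> bool" where
  "add_voter Pr i Pr' \<longleftrightarrow> is_profile Pr' \<and> i \<notin> voters Pr \<and>
     voters Pr' = insert i (voters Pr) \<and> cands Pr' = cands Pr \<and>
     (\<forall>j\<in>voters Pr. ballot Pr' j = ballot Pr j)"

definition tolerant_positive_involvement :: "(('v, 'c) profile \<Rightarrow> 'c set) \<Rightarrow> bool" where
  "tolerant_positive_involvement F \<longleftrightarrow>
     (\<forall>Pr Pr' i x. is_profile Pr \<and> x \<in> F Pr \<and> add_voter Pr i Pr' \<and>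
        (\<forall>y\<in>cands Pr. y \<noteq> x \<and> \<not> margin Pr x y > 0 \<longrightarrow> (x, y) \<in> ballot Pr' i)
        \<longrightarrow> x \<in> F Pr')"

end

theory Submission
  imports Defs
begin

lemma swo_rank: "strict_weak_order_on X {(a,b). a\<in>X \<and> b\<in>X \<and> (r a::nat) < r b}"
  unfolding strict_weak_order_on_def by auto

lemma margin_anti: "margin Q a b = - margin Q b a"
  by (simp add: margin_def)

lemma doubling_margin:
  assumes "doubling Pr Pr2" "is_profile Pr"
  shows "margin Pr2 a b = 2 * margin Pr a b"
proof -
  from assms obtain g where g: "g ` voters Pr2 \<subseteq> voters Pr"
    "\<forall>i\<in>voters Pr. card {j \<in> voters Pr2. g j = i} = 2"
    "\<forall>j\<in>voters Pr2. ballot Pr2 j = ballot Pr (g j)" unfolding doubling_def by blast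
  have fin2: "finite (voters Pr2)" using assms unfolding doubling_def is_profile_def by blast
  have fin: "finite (voters Pr)" using assms(2) is_profile_def by blast
  have key: "card {j \<in> voters Pr2. p \<in> ballot Pr2 j} = 2 * card {i \<in> voters Pr. p \<in> ballot Pr i}" for p
  proof -
    let ?S = "{i \<in> voters Pr. p \<in> ballot Pr i}"
    have eq: "{j \<in> voters Pr2. p \<in> ballot Pr2 j} = (\<Union>i\<in>?S. {j \<in> voters Pr2. g j = i})"
      using g by auto
    have "card (\<Union>i\<in>?S. {j \<in> voters Pr2. g j = i}) = (\<Sum>i\<in>?S. card {j \<in> voters Pr2. g j = i})"
      by (rule card_UN_disjoint) (use fin fin2 in auto)
    also have "\<dots> = (\<Sum>i\<in>?S. 2)" using g(2) by (intro sum.cong) auto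
    finally show ?thesis using eq by simp
  qed
  show ?thesis unfolding margin_def using key[of "(a,b)"] key[of "(b,a)"] by simp
qed

definition addv :: "('v,'c) profile \<Rightarrow> 'v \<Rightarrow> ('c \<times> 'c) set \<Rightarrow> ('v,'c) profile" where
  "addv Q i R = (insert i (voters Q), cands Q, (ballot Q)(i := R))"

lemma addv_simps:
  "voters (addv Q i R) = insert i (voters Q)"
  "cands (addv Q i R) = cands Q"
  "ballot (addv Q i R) = (ballot Q)(i := R)"
  by (simp_all add: addv_def voters_def cands_def ballot_def)

lemma addv_profile:
  assumes "is_profile Q" "strict_weak_order_on (cands Q) R" "i \<notin> voters Q"
  shows "is_profile (addv Q i R) \<and> add_voter Q i (addv Q i R)"
proof -
  have "is_profile (addv Q i R)" using assms unfolding is_profile_def by (auto simp: addv_simps)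
  then show ?thesis using assms unfolding add_voter_def by (auto simp: addv_simps)
qed

lemma addv_margin:
  assumes "is_profile Q" "i \<notin> voters Q"
  shows "margin (addv Q i R) a b = margin Q a b + (if (a,b)\<in>R then 1 else 0) - (if (b,a)\<in>R then 1 else 0)"
proof -
  have fin: "finite (voters Q)" using assms(1) is_profile_def by blast
  have c: "card {j \<in> insert i (voters Q). p \<in> ((ballot Q)(i:=R)) j}
      = card {j \<in> voters Q. p \<in> ballot Q j} + (if p \<in> R then 1 else 0)" for p
  proof (cases "p \<in> R")
    case True
    then have "{j \<in> insert i (voters Q). p \<in> ((ballot Q)(i:=R)) j} = insert i {j \<in> voters Q. p \<in> ballot Q j}"
      using assms(2) by auto
    then show ?thesis using True fin assms(2) by simp
  next
    case False
    then have "{j \<in> insert i (voters Q). p \<in> ((ballot Q)(i:=R)) j} = {j \<in> voters Q. p \<in> ballot Q j}"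
      using assms(2) by auto
    then show ?thesis using False by simp
  qed
  show ?thesis unfolding margin_def addv_simps using c[of "(a,b)"] c[of "(b,a)"] by simp
qed

lemma step:
  assumes inf: "infinite (UNIV::'v set)" and tpi: "tolerant_positive_involvement F"
    and Q: "is_profile (Q::('v,'c) profile)" and yF: "y \<in> F Q" and yC: "y \<in> C" and Cc: "C \<subseteq> cands Q"
  shows "\<exists>Q'. is_profile Q' \<and> cands Q' = cands Q \<and> y \<in> F Q' \<and>
     (\<forall>a\<in>C-{y}. \<forall>b\<in>cands Q - C. margin Q' a b = margin Q a b - 1) \<and>
     (\<forall>b\<in>cands Q - C. margin Q' y b = (if margin Q y b > 0 then margin Q y b - 1 else margin Q y b + 1))"
proof -
  obtain i where i: "i \<notin> voters Q" using ex_new_if_finite[OF inf] Q unfolding is_profile_def by blast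
  define r :: "'c \<Rightarrow> nat" where "r z = (if z \<in> C - {y} then 3 else if z = y then 1
       else if margin Q y z > 0 then 0 else 2)" for z
  define R where "R = {(a,b). a \<in> cands Q \<and> b \<in> cands Q \<and> r a < r b}"
  have swo: "strict_weak_order_on (cands Q) R" unfolding R_def by (rule swo_rank)
  have P': "is_profile (addv Q i R)" and av: "add_voter Q i (addv Q i R)"
    using addv_profile[OF Q swo i] by auto
  have yc: "y \<in> cands Q" using yC Cc by auto
  have cond: "\<forall>z\<in>cands Q. z \<noteq> y \<and> \<not> margin Q y z > 0 \<longrightarrow> (y,z) \<in> ballot (addv Q i R) i"
    by (auto simp: addv_simps R_def r_def yc)
  then have yF': "y \<in> F (addv Q i R)" using tpi Q yF av unfolding tolerant_positive_involvement_def by blast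
  have m1: "margin (addv Q i R) a b = margin Q a b - 1" if "a \<in> C-{y}" "b \<in> cands Q - C" for a b
    using that addv_margin[OF Q i, of R a b] Cc yC by (auto simp: R_def r_def)
  have m2: "margin (addv Q i R) y b = (if margin Q y b > 0 then margin Q y b - 1 else margin Q y b + 1)"
    if "b \<in> cands Q - C" for b
    using that addv_margin[OF Q i, of R y b] yc yC by (auto simp: R_def r_def)
  show ?thesis by (intro exI[of _ "addv Q i R"]) (auto simp: addv_simps P' m1 m2 yF')
qed

lemma iter:
  assumes inf: "infinite (UNIV::'v set)" and tpi: "tolerant_positive_involvement F"
    and Q0: "is_profile (Q0::('v,'c) profile)" and yF: "y \<in> F Q0" and yC: "y \<in> C" and Cc: "C \<subseteq> cands Q0"
    and x: "x \<in> cands Q0" "x \<notin> C"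
  shows "int n < margin Q0 x y \<Longrightarrow> \<exists>Q. is_profile Q \<and> cands Q = cands Q0 \<and> y \<in> F Q \<and>
     margin Q x y = margin Q0 x y - int n \<and>
     (\<forall>a\<in>C-{y}. \<forall>b\<in>cands Q0 - C. margin Q a b = margin Q0 a b - int n) \<and>
     (\<forall>b\<in>cands Q0 - C. margin Q y b \<le> max (margin Q0 y b - int n) 0 + 1 \<and>
         even (margin Q y b - margin Q0 y b + int n))"
proof (induction n)
  case 0
  show ?case using assms by (intro exI[of _ Q0]) auto
next
  case (Suc n)
  then obtain Q where Q: "is_profile Q" "cands Q = cands Q0" "y \<in> F Q"
     "margin Q x y = margin Q0 x y - int n"
     "\<forall>a\<in>C-{y}. \<forall>b\<in>cands Q0 - C. margin Q a b = margin Q0 a b - int n"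
     "\<forall>b\<in>cands Q0 - C. margin Q y b \<le> max (margin Q0 y b - int n) 0 + 1 \<and>
         even (margin Q y b - margin Q0 y b + int n)" by auto
  obtain Q' where Q': "is_profile Q'" "cands Q' = cands Q" "y \<in> F Q'"
     "\<forall>a\<in>C-{y}. \<forall>b\<in>cands Q - C. margin Q' a b = margin Q a b - 1"
     "\<forall>b\<in>cands Q - C. margin Q' y b = (if margin Q y b > 0 then margin Q y b - 1 else margin Q y b + 1)"
    using step[OF inf tpi Q(1) Q(3) yC] Cc Q(2) by auto
  have xm: "margin Q' x y = margin Q0 x y - int (Suc n)"
  proof -
    have "margin Q y x < 0" using Q(4) Suc.prems margin_anti[of Q y x] by simp
    then have "margin Q' y x = margin Q y x + 1" using Q'(5) x Q(2) by auto
    then show ?thesis using margin_anti[of Q' x y] margin_anti[of Q x y] Q(4) by simp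
  qed
  have yb: "margin Q' y b \<le> max (margin Q0 y b - int (Suc n)) 0 + 1 \<and>
         even (margin Q' y b - margin Q0 y b + int (Suc n))" if b: "b \<in> cands Q0 - C" for b
  proof -
    define v where "v = margin Q y b"
    define m where "m = margin Q0 y b"
    have h1: "v \<le> max (m - int n) 0 + 1" "even (v - m + int n)" using Q(6) b v_def m_def by auto
    have e: "margin Q' y b = (if v > 0 then v - 1 else v + 1)" using Q'(5) b Q(2) v_def by auto
    show ?thesis
    proof (cases "v > 0")
      case True
      have p: "v - 1 - m + int (Suc n) = v - m + int n" by simp
      have "v - 1 \<le> max (m - int (Suc n)) 0 + 1" using h1(1) True by (simp add: max_def split: if_splits)
      moreover have "even (margin Q' y b - margin Q0 y b + int (Suc n))"
        using e True h1(2) p m_def by (simp only: if_True)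
      ultimately show ?thesis using e True m_def by simp
    next
      case False
      have p: "v + 1 - m + int (Suc n) = (v - m + int n) + 2" by simp
      have "v + 1 \<le> max (m - int (Suc n)) 0 + 1" using False by (simp add: max_def)
      moreover have "even (v + 1 - m + int (Suc n))" unfolding p by (rule dvd_add[OF h1(2)]) simp
      ultimately show ?thesis using e False m_def by simp
    qed
  qed
  show ?case
    apply (intro exI[of _ Q'])
    using Q Q' xm yb by auto
qed

lemma trancl_path:
  assumes "(a,b) \<in> E\<^sup>+" "E \<subseteq> {(a,b). a \<in> cands Pr \<and> b \<in> cands Pr \<and> margin Pr a b \<ge> k}"
  shows "\<exists>zs. length zs \<ge> 2 \<and> hd zs = a \<and> last zs = b \<and> set zs \<subseteq> cands Pr \<and>
           (\<forall>i<length zs - 1. margin Pr (zs!i) (zs!Suc i) \<ge> k)"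
  using assms(1)
proof (induction rule: converse_trancl_induct)
  case (base a)
  then show ?case using assms(2) by (intro exI[of _ "[a,b]"]) (auto simp: less_Suc_eq)
next
  case (step a z)
  then obtain zs where zs: "length zs \<ge> 2" "hd zs = z" "last zs = b" "set zs \<subseteq> cands Pr"
    "\<forall>i<length zs - 1. margin Pr (zs!i) (zs!Suc i) \<ge> k" by blast
  have ne: "zs \<noteq> []" using zs(1) by auto
  have edge: "a \<in> cands Pr" "margin Pr a z \<ge> k" using step(1) assms(2) by auto
  have "\<forall>i<length (a#zs) - 1. k \<le> margin Pr ((a#zs)!i) ((a#zs)!Suc i)"
  proof (intro allI impI)
    fix i assume i: "i < length (a#zs) - 1"
    show "k \<le> margin Pr ((a#zs)!i) ((a#zs)!Suc i)"
    proof (cases i)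
      case 0 then show ?thesis using zs(2) ne edge by (simp add: hd_conv_nth)
    next
      case (Suc j) then show ?thesis using zs(5) i by simp
    qed
  qed
  then show ?case using zs ne edge by (intro exI[of _ "a#zs"]) auto
qed

lemma strength_ge:
  assumes "length zs \<ge> 2" "\<forall>i<length zs - 1. margin Pr (zs!i) (zs!Suc i) \<ge> k"
  shows "path_strength Pr zs \<ge> k"
proof -
  have eq: "{margin Pr (zs ! i) (zs ! Suc i) | i. i < length zs - 1}
      = (\<lambda>i. margin Pr (zs!i) (zs!Suc i)) ` {..<length zs - 1}" by auto
  have ne: "{..<length zs - 1} \<noteq> {}" using assms(1) by (auto simp: lessThan_empty_iff)
  show ?thesis unfolding path_strength_def eq using assms(2) ne by (subst Min_ge_iff) auto
qed

lemma cross: "zs \<noteq> [] \<Longrightarrow> hd zs \<in> C \<Longrightarrow> last zs \<notin> C \<Longrightarrow> \<exists>i<length zs - 1. zs!i \<in> C \<and> zs!Suc i \<notin> C"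
proof (induction zs)
  case Nil thus ?case by simp
next
  case (Cons a zs)
  show ?case
  proof (cases "zs = []")
    case True with Cons show ?thesis by simp
  next
    case False
    show ?thesis
    proof (cases "hd zs \<in> C")
      case True
      then obtain i where "i < length zs - 1" "zs!i \<in> C" "zs!Suc i \<notin> C" using Cons False by auto
      then show ?thesis by (intro exI[of _ "Suc i"]) auto
    next
      case F: False
      then show ?thesis using Cons.prems False by (intro exI[of _ 0]) (auto simp: hd_conv_nth)
    qed
  qed
qed

theorem theorem7p9:
  fixes F :: "('v, 'c) profile \<Rightarrow> 'c set"
  assumes "infinite (UNIV :: 'v set)"
    and "infinite (UNIV :: 'c set)"
    and "VSCC F"
    and "downward_homogeneity F"
    and "coherent_defeat F"
    and "tolerant_positive_involvement F"
    and "is_profile Pr"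
  shows "F Pr \<subseteq> SC Pr"
proof
  fix y assume yF: "y \<in> F Pr"
  have yc: "y \<in> cands Pr" using assms(3,7) yF unfolding VSCC_def by blast
  show "y \<in> SC Pr"
  proof (rule ccontr)
    assume "y \<notin> SC Pr"
    then obtain x where xy: "(x,y) \<in> sc Pr" using yc unfolding SC_def by blast
    define k where "k = margin Pr x y"
    have xc: "x \<in> cands Pr" and kpos: "k > 0"
      and strong: "\<forall>zs. majority_path_from_to Pr y x zs \<longrightarrow> k > path_strength Pr zs"
      using xy unfolding sc_def k_def by auto
    define E where "E = {(a,b). a \<in> cands Pr \<and> b \<in> cands Pr \<and> margin Pr a b \<ge> k}"
    define C where "C = {z. (y,z) \<in> E\<^sup>*}"
    have yC: "y \<in> C" unfolding C_def by simp
    have Cc: "C \<subseteq> cands Pr"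
    proof
      fix z assume "z \<in> C"
      then have "(y,z) \<in> E\<^sup>*" unfolding C_def by simp
      then show "z \<in> cands Pr" using yc by (cases rule: rtranclE) (auto simp: E_def)
    qed
    have leave: "margin Pr a b < k" if "a \<in> C" "b \<in> cands Pr" "b \<notin> C" for a b
    proof (rule ccontr)
      assume "\<not> margin Pr a b < k"
      then have "(a,b) \<in> E" using that Cc unfolding E_def by auto
      then have "b \<in> C" using that(1) unfolding C_def by (auto intro: rtrancl_into_rtrancl)
      then show False using that by simp
    qed
    have xnC: "x \<notin> C"
    proof
      assume "x \<in> C"
      have "x \<noteq> y" using kpos k_def by (auto simp: margin_def)
      then have "(y,x) \<in> E\<^sup>+" using \<open>x\<in>C\<close> by (auto simp: C_def rtrancl_eq_or_trancl)
      then obtain zs where zs: "length zs \<ge> 2" "hd zs = y" "last zs = x" "set zs \<subseteq> cands Pr"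
           "\<forall>i<length zs - 1. margin Pr (zs!i) (zs!Suc i) \<ge> k"
        using trancl_path[of y x E Pr k] E_def by auto
      have "majority_path_from_to Pr y x zs"
        unfolding majority_path_from_to_def majority_path_def using kpos zs by force
      moreover have "path_strength Pr zs \<ge> k" using strength_ge zs(1,5) by blast
      ultimately show False using strong by force
    qed
    obtain Pr2 where d: "doubling Pr Pr2" and yF2: "y \<in> F Pr2"
      using assms(4,7) yF unfolding downward_homogeneity_def by blast
    have P2: "is_profile Pr2" and c2: "cands Pr2 = cands Pr" using d unfolding doubling_def by auto
    have m2: "margin Pr2 a b = 2 * margin Pr a b" for a b using doubling_margin[OF d assms(7)] .
    define N where "N = nat (2*k - 2)"
    have N: "int N = 2*k - 2" using kpos N_def by simp
    have "int N < margin Pr2 x y" using N m2 k_def by simp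
    then obtain Q where Q: "is_profile Q" "cands Q = cands Pr2" "y \<in> F Q"
       "margin Q x y = margin Pr2 x y - int N"
       "\<forall>a\<in>C-{y}. \<forall>b\<in>cands Pr2 - C. margin Q a b = margin Pr2 a b - int N"
       "\<forall>b\<in>cands Pr2 - C. margin Q y b \<le> max (margin Pr2 y b - int N) 0 + 1 \<and>
         even (margin Q y b - margin Pr2 y b + int N)"
      using iter[OF assms(1) assms(6) P2 yF2 yC, of x N] Cc c2 xc xnC by auto
    have "margin Q x y > 0" using Q(4) m2 N k_def by simp
    moreover have "\<not> (\<exists>zs. majority_path_from_to Q y x zs)"
    proof
      assume "\<exists>zs. majority_path_from_to Q y x zs"
      then obtain zs where zs: "majority_path_from_to Q y x zs" by blast
      have "zs \<noteq> []" "hd zs \<in> C" "last zs \<notin> C" using zs yC xnC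
        unfolding majority_path_from_to_def majority_path_def by auto
      then obtain i where i: "i < length zs - 1" "zs!i \<in> C" "zs!Suc i \<notin> C" using cross by blast
      have pos: "margin Q (zs!i) (zs!Suc i) > 0" using zs i
        unfolding majority_path_from_to_def majority_path_def by auto
      have "zs!Suc i \<in> set zs" using i(1) by auto
      then have inc: "zs!Suc i \<in> cands Pr" using zs Q(2) c2
        unfolding majority_path_from_to_def majority_path_def by auto
      have "margin Q (zs!i) (zs!Suc i) \<le> 0"
      proof (cases "zs!i = y")
        case True
        define b where "b = zs!Suc i"
        define v where "v = margin Q y b"
        define m where "m = margin Pr y b"
        have bb: "b \<in> cands Pr2 - C" using inc i c2 b_def by auto
        have h: "v \<le> max (2*m - int N) 0 + 1" "even (v - 2*m + int N)"
          using Q(6) bb v_def m_def m2 by auto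
        have "m < k" using leave[OF yC] inc i b_def m_def by auto
        then have h2: "v \<le> 1" using h N by (auto simp: max_def)
        have "v - 2*m + int N = v + 2*(k - 1 - m)" using N by simp
        then have "even v" using h(2) by simp
        then have "v \<noteq> 1" by auto
        then show ?thesis using h2 True v_def b_def by simp
      next
        case False
        have "margin Q (zs!i) (zs!Suc i) = 2 * margin Pr (zs!i) (zs!Suc i) - int N"
          using Q(5) False i inc c2 m2 by auto
        moreover have "margin Pr (zs!i) (zs!Suc i) < k" using leave i inc by auto
        ultimately show ?thesis using N by simp
      qed
      then show False using pos by simp
    qed
    ultimately have "y \<notin> F Q" using assms(5) Q(1) unfolding coherent_defeat_def by blast
    with Q(3) show False by simp
  qed
qed

end
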